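(* Let $G$ be a finite group, $f\in\mathrm{Aut}(G)$, and $\Lambda$ a subgroup of $\mathrm{Fix}(G,f)=\{x\in G: f(x)=x\}$. Then there is a function $\phi:\mathscr{H}(G,\Lambda,f)\times\mathscr{H}(G,\Lambda,f)\to\Lambda$ such that $\Lambda\times_\phi\mathscr{H}(G,\Lambda,f)$ is a quandle and $$\mathrm{GAlex}(G,f)\cong\Lambda\times_\phi\mathscr{H}(G,\Lambda,f),$$ and the projection $\pi:\Lambda\times_\phi\mathscr{H}(G,\Lambda,f)\to\mathscr{H}(G,\Lambda,f)$, $(\lambda,\Lambda g)\mapsto\Lambda g$, is equivalent to $p_\Lambda:\mathrm{GAlex}(G,f)\to\mathscr{H}(G,\Lambda,f)$, $p_\Lambda(g)=\Lambda g$. Moreover, if $\Lambda=\mathrm{Fix}(G,f)$, then $\pi$ is equivalent to $\mathrm{inn}:\mathrm{GAlex}(G,f)\to\mathrm{inn}(\mathrm{GAlex}(G,f))$.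
   Context: A quandle is a set with operation $*$ satisfying $a*a=a$; unique right division; $(a*b)*c=(a*c)*(b*c)$. $R_a(y)=y*a$; $\mathrm{inn}(a)=R_a$, and $\mathrm{inn}(Q)=\{R_a\}$ is a quandle with $R_a*R_b=R_{a*b}$. $\mathrm{GAlex}(G,f)$ is the quandle on $G$ with $a*b=f(ab^{-1})b$. For a subgroup $H\le\mathrm{Fix}(G,f)$, $\mathscr{H}(G,H,f)$ is the quandle on the right cosets $\{Hg\}$ with $Ha*Hb=Hf(ab^{-1})b$. For a quandle $X$ and a (not necessarily abelian) group $\Lambda$, and a function $\phi:X\times X\to\Lambda$, $\Lambda\times_\phi X$ denotes $\Lambda\times X$ with $(\lambda,a)*(\mu,b)=(\lambda\phi(a,b),a*b)$ (when this is a quandle). Homomorphisms $f_1:A\to B$, $f_2:C\to D$ are equivalent if there are isomorphisms $i:A\to C$, $j:B\to D$ with $j f_1=f_2 i$. *)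

theory Defs
  imports "HOL-Algebra.Coset"
begin

definition quandle :: "'a set \<Rightarrow> ('a \<Rightarrow> 'a \<Rightarrow> 'a) \<Rightarrow> bool" where
  "quandle X m \<longleftrightarrow>
     (\<forall>a\<in>X. \<forall>b\<in>X. m a b \<in> X) \<and>
     (\<forall>a\<in>X. m a a = a) \<and>
     (\<forall>a\<in>X. \<forall>b\<in>X. \<exists>!x. x \<in> X \<and> m x a = b) \<and>
     (\<forall>a\<in>X. \<forall>b\<in>X. \<forall>c\<in>X. m (m a b) c = m (m a c) (m b c))"

definition quandle_hom ::
  "'a set \<Rightarrow> ('a \<Rightarrow> 'a \<Rightarrow> 'a) \<Rightarrow> 'b set \<Rightarrow> ('b \<Rightarrow> 'b \<Rightarrow> 'b) \<Rightarrow> ('a \<Rightarrow> 'b) \<Rightarrow> bool" where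
  "quandle_hom X mX Y mY h \<longleftrightarrow>
     (\<forall>a\<in>X. h a \<in> Y) \<and> (\<forall>a\<in>X. \<forall>b\<in>X. h (mX a b) = mY (h a) (h b))"

definition quandle_iso ::
  "'a set \<Rightarrow> ('a \<Rightarrow> 'a \<Rightarrow> 'a) \<Rightarrow> 'b set \<Rightarrow> ('b \<Rightarrow> 'b \<Rightarrow> 'b) \<Rightarrow> ('a \<Rightarrow> 'b) \<Rightarrow> bool" where
  "quandle_iso X mX Y mY h \<longleftrightarrow> quandle_hom X mX Y mY h \<and> bij_betw h X Y"

definition quandle_isomorphic ::
  "'a set \<Rightarrow> ('a \<Rightarrow> 'a \<Rightarrow> 'a) \<Rightarrow> 'b set \<Rightarrow> ('b \<Rightarrow> 'b \<Rightarrow> 'b) \<Rightarrow> bool" where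
  "quandle_isomorphic X mX Y mY \<longleftrightarrow> (\<exists>h. quandle_iso X mX Y mY h)"

definition hom_equivalent ::
  "'a set \<Rightarrow> ('a \<Rightarrow> 'a \<Rightarrow> 'a) \<Rightarrow> 'b set \<Rightarrow> ('b \<Rightarrow> 'b \<Rightarrow> 'b) \<Rightarrow> ('a \<Rightarrow> 'b) \<Rightarrow>
   'c set \<Rightarrow> ('c \<Rightarrow> 'c \<Rightarrow> 'c) \<Rightarrow> 'd set \<Rightarrow> ('d \<Rightarrow> 'd \<Rightarrow> 'd) \<Rightarrow> ('c \<Rightarrow> 'd) \<Rightarrow> bool" where
  "hom_equivalent A mA B mB f1 C mC D mD f2 \<longleftrightarrow>
     (\<exists>i j. quandle_iso A mA C mC i \<and> quandle_iso B mB D mD j \<and>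
            (\<forall>x\<in>A. j (f1 x) = f2 (i x)))"

definition Fix :: "('a, 'b) monoid_scheme \<Rightarrow> ('a \<Rightarrow> 'a) \<Rightarrow> 'a set" where
  "Fix G f = {x \<in> carrier G. f x = x}"

definition galex_op :: "('a, 'b) monoid_scheme \<Rightarrow> ('a \<Rightarrow> 'a) \<Rightarrow> 'a \<Rightarrow> 'a \<Rightarrow> 'a" where
  "galex_op G f a b = f (a \<otimes>\<^bsub>G\<^esub> inv\<^bsub>G\<^esub> b) \<otimes>\<^bsub>G\<^esub> b"

text \<open>The quandle H(G,H,f) on the right cosets H g (carrier: rcosets H),
  with Ha * Hb = H f(a b^-1) b, computed via chosen representatives.\<close>
definition hq_op :: "('a, 'b) monoid_scheme \<Rightarrow> 'a set \<Rightarrow> ('a \<Rightarrow> 'a) \<Rightarrow> 'a set \<Rightarrow> 'a set \<Rightarrow> 'a set" where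
  "hq_op G H f A B =
     (let a = (SOME a. a \<in> carrier G \<and> A = H #>\<^bsub>G\<^esub> a);
          b = (SOME b. b \<in> carrier G \<and> B = H #>\<^bsub>G\<^esub> b)
      in H #>\<^bsub>G\<^esub> galex_op G f a b)"

text \<open>Twisted product \<Lambda> \<times>_\<phi> X: (\<lambda>,a) * (\<mu>,b) = (\<lambda> \<phi>(a,b), a * b), where \<Lambda> is a
  subgroup of G (so its multiplication is that of G).\<close>
definition twisted_op ::
  "('a, 'b) monoid_scheme \<Rightarrow> ('x \<Rightarrow> 'x \<Rightarrow> 'x) \<Rightarrow> ('x \<Rightarrow> 'x \<Rightarrow> 'a) \<Rightarrow> 'a \<times> 'x \<Rightarrow> 'a \<times> 'x \<Rightarrow> 'a \<times> 'x" where
  "twisted_op G m phi p q = (fst p \<otimes>\<^bsub>G\<^esub> phi (snd p) (snd q), m (snd p) (snd q))"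

definition inn_map :: "'a set \<Rightarrow> ('a \<Rightarrow> 'a \<Rightarrow> 'a) \<Rightarrow> 'a \<Rightarrow> ('a \<Rightarrow> 'a)" where
  "inn_map X m a = restrict (\<lambda>y. m y a) X"

definition inn_carrier :: "'a set \<Rightarrow> ('a \<Rightarrow> 'a \<Rightarrow> 'a) \<Rightarrow> ('a \<Rightarrow> 'a) set" where
  "inn_carrier X m = inn_map X m ` X"

definition inn_op :: "'a set \<Rightarrow> ('a \<Rightarrow> 'a \<Rightarrow> 'a) \<Rightarrow> ('a \<Rightarrow> 'a) \<Rightarrow> ('a \<Rightarrow> 'a) \<Rightarrow> ('a \<Rightarrow> 'a)" where
  "inn_op X m F K =
     inn_map X m (m (SOME a. a \<in> X \<and> F = inn_map X m a) (SOME b. b \<in> X \<and> K = inn_map X m b))"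

end

theory Submission imports Defs begin

lemma quandle_transport:
  assumes "quandle Y mY" "quandle_iso X mX Y mY i" "\<forall>a\<in>X. \<forall>b\<in>X. mX a b \<in> X"
  shows "quandle X mX"
proof -
  have hq: "quandle_hom X mX Y mY i" and bb: "bij_betw i X Y" using assms(2) unfolding quandle_iso_def by auto
  have h1: "\<And>a. a \<in> X \<Longrightarrow> i a \<in> Y" using hq unfolding quandle_hom_def by blast
  have h2: "\<And>a b. a \<in> X \<Longrightarrow> b \<in> X \<Longrightarrow> i (mX a b) = mY (i a) (i b)"
    using hq unfolding quandle_hom_def by blast
  have inj: "inj_on i X" and sur: "i ` X = Y" using bb unfolding bij_betw_def by auto
  have cl: "\<And>a b. a \<in> X \<Longrightarrow> b \<in> X \<Longrightarrow> mX a b \<in> X" using assms(3) by blast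
  have Q0: "(\<forall>a\<in>Y. \<forall>b\<in>Y. mY a b \<in> Y) \<and> (\<forall>a\<in>Y. mY a a = a) \<and>
     (\<forall>a\<in>Y. \<forall>b\<in>Y. \<exists>!x. x \<in> Y \<and> mY x a = b) \<and>
     (\<forall>a\<in>Y. \<forall>b\<in>Y. \<forall>c\<in>Y. mY (mY a b) c = mY (mY a c) (mY b c))"
    using assms(1) unfolding quandle_def .
  note Q2 = Q0[THEN conjunct2, THEN conjunct1]
  note Q3 = Q0[THEN conjunct2, THEN conjunct2, THEN conjunct1]
  note Q4 = Q0[THEN conjunct2, THEN conjunct2, THEN conjunct2]
  have idem: "\<forall>a\<in>X. mX a a = a"
  proof
    fix a assume a: "a \<in> X"
    have "i (mX a a) = mY (i a) (i a)" using h2 a by blast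
    also have "\<dots> = i a" using Q2 h1 a by blast
    finally show "mX a a = a" using inj a cl by (meson inj_onD)
  qed
  have dist: "\<forall>a\<in>X. \<forall>b\<in>X. \<forall>c\<in>X. mX (mX a b) c = mX (mX a c) (mX b c)"
  proof (intro ballI)
    fix a b c assume abc: "a \<in> X" "b \<in> X" "c \<in> X"
    have "i (mX (mX a b) c) = mY (mY (i a) (i b)) (i c)" using h2 abc cl by metis
    also have "\<dots> = mY (mY (i a) (i c)) (mY (i b) (i c))" using Q4 h1 abc by blast
    also have "\<dots> = i (mX (mX a c) (mX b c))" using h2 abc cl by metis
    finally show "mX (mX a b) c = mX (mX a c) (mX b c)" using inj abc cl by (meson inj_onD)
  qed
  have div: "\<forall>a\<in>X. \<forall>b\<in>X. \<exists>!x. x \<in> X \<and> mX x a = b"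
  proof (intro ballI)
    fix a b assume ab: "a \<in> X" "b \<in> X"
    have U: "\<exists>!y. y \<in> Y \<and> mY y (i a) = i b" using Q3 h1 ab by blast
    then obtain y where y: "y \<in> Y" "mY y (i a) = i b" by blast
    obtain x where x: "x \<in> X" "i x = y" using sur y by blast
    have "i (mX x a) = i b" using x y h2 ab by metis
    hence ex: "x \<in> X \<and> mX x a = b"
      using x ab cl inj by (meson inj_onD)
    show "\<exists>!x. x \<in> X \<and> mX x a = b"
    proof (rule ex1I[where a=x])
      show "x \<in> X \<and> mX x a = b" by (fact ex)
    next
      fix z assume z: "z \<in> X \<and> mX z a = b"
      have P1: "i z \<in> Y \<and> mY (i z) (i a) = i b" using z h1 h2 ab by metis
      have P2: "i x \<in> Y \<and> mY (i x) (i a) = i b" using ex h1 h2 ab by metis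
      have "i z = i x" using U P1 P2 by blast
      thus "z = x" using inj z ex by (meson inj_onD)
    qed
  qed
  show ?thesis unfolding quandle_def using cl idem div dist by blast
qed

lemma quandle_iso_inv:
  assumes "quandle_iso X mX Y mY i" "\<forall>a\<in>X. \<forall>b\<in>X. mX a b \<in> X"
  shows "quandle_iso Y mY X mX (inv_into X i)"
proof -
  have h: "\<And>a b. a \<in> X \<Longrightarrow> b \<in> X \<Longrightarrow> i (mX a b) = mY (i a) (i b)"
    and b: "bij_betw i X Y"
    using assms(1) by (auto simp: quandle_iso_def quandle_hom_def)
  have bi: "bij_betw (inv_into X i) Y X" using b by (rule bij_betw_inv_into)
  have "\<forall>a\<in>Y. \<forall>b\<in>Y. inv_into X i (mY a b) = mX (inv_into X i a) (inv_into X i b)"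
  proof (intro ballI)
    fix a b assume ab: "a \<in> Y" "b \<in> Y"
    let ?x = "inv_into X i a" and ?y = "inv_into X i b"
    have xy: "?x \<in> X" "?y \<in> X" "i ?x = a" "i ?y = b" using ab b
      by (auto simp: bij_betw_def inv_into_into f_inv_into_f)
    have "i (mX ?x ?y) = mY a b" using h xy by simp
    moreover have "inj_on i X" using b by (simp add: bij_betw_def)
    ultimately show "inv_into X i (mY a b) = mX ?x ?y" using xy assms(2)
      by (metis inv_into_f_f)
  qed
  thus ?thesis using bi unfolding quandle_iso_def quandle_hom_def
    by (auto simp: bij_betw_def)
qed

lemma quandle_iso_id: "quandle_iso X m X m (\<lambda>x. x)"
  by (simp add: quandle_iso_def quandle_hom_def bij_betw_def)

locale gal = group G for G (structure) +
  fixes f L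
  assumes f_iso: "f \<in> iso G G" and subL: "subgroup L G" and fixL: "L \<subseteq> Fix G f"
begin

lemma f_hom: "f \<in> hom G G" using f_iso by (simp add: iso_def)
lemma f_bij: "bij_betw f (carrier G) (carrier G)" using f_iso by (simp add: iso_def)

sublocale fh: group_hom G G f
  by (simp add: group_hom_axioms_def group_hom_def f_hom is_group)

lemma f_mult[simp]: "x \<in> carrier G \<Longrightarrow> y \<in> carrier G \<Longrightarrow> f (x \<otimes> y) = f x \<otimes> f y"
  by simp
lemma f_carr[simp]: "x \<in> carrier G \<Longrightarrow> f x \<in> carrier G" by simp

lemma L_carr: "l \<in> L \<Longrightarrow> l \<in> carrier G" by (rule subgroup.mem_carrier[OF subL])
lemma L_fix: "l \<in> L \<Longrightarrow> f l = l" using fixL unfolding Fix_def by blast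
lemma L_inv: "l \<in> L \<Longrightarrow> inv l \<in> L" by (rule subgroup.m_inv_closed[OF subL])
lemma L_mult: "l \<in> L \<Longrightarrow> m \<in> L \<Longrightarrow> l \<otimes> m \<in> L" by (rule subgroup.m_closed[OF subL])
lemma L_sub: "L \<subseteq> carrier G" by (rule subgroup.subset[OF subL])

lemma gop_carr: "a \<in> carrier G \<Longrightarrow> b \<in> carrier G \<Longrightarrow> galex_op G f a b \<in> carrier G"
  by (simp add: galex_op_def)

lemma gop_idem: "a \<in> carrier G \<Longrightarrow> galex_op G f a a = a"
  by (simp add: galex_op_def)

lemma cancel1: "c \<in> carrier G \<Longrightarrow> x \<in> carrier G \<Longrightarrow> c \<otimes> (inv c \<otimes> x) = x"
  by (simp add: m_assoc[symmetric])

lemma cancel2: "c \<in> carrier G \<Longrightarrow> x \<in> carrier G \<Longrightarrow> inv c \<otimes> (c \<otimes> x) = x"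
  by (simp add: m_assoc[symmetric])

lemma gop_quot: assumes "a \<in> carrier G" "b \<in> carrier G" "c \<in> carrier G"
  shows "galex_op G f a c \<otimes> inv (galex_op G f b c) = f (a \<otimes> inv b)"
proof -
  have "galex_op G f a c \<otimes> inv (galex_op G f b c) = f (a \<otimes> inv c) \<otimes> (c \<otimes> inv c) \<otimes> inv (f (b \<otimes> inv c))"
    using assms by (simp add: galex_op_def m_assoc inv_mult_group cancel1 del: f_mult)
  also have "\<dots> = f (a \<otimes> inv c) \<otimes> inv (f (b \<otimes> inv c))" using assms by (metis r_inv r_one f_carr inv_closed m_closed)
  also have "\<dots> = f ((a \<otimes> inv c) \<otimes> inv (b \<otimes> inv c))" using assms by simp
  also have "(a \<otimes> inv c) \<otimes> inv (b \<otimes> inv c) = a \<otimes> inv b" using assms by (simp add: m_assoc inv_mult_group cancel2)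
  finally show ?thesis .
qed

lemma gop_dist: assumes "a \<in> carrier G" "b \<in> carrier G" "c \<in> carrier G"
  shows "galex_op G f (galex_op G f a b) c = galex_op G f (galex_op G f a c) (galex_op G f b c)"
proof -
  have "galex_op G f (galex_op G f a c) (galex_op G f b c) = f (f (a \<otimes> inv b)) \<otimes> (f (b \<otimes> inv c) \<otimes> c)"
    using assms gop_quot by (simp add: galex_op_def del: f_mult)
  moreover have "galex_op G f (galex_op G f a b) c = f (f (a \<otimes> inv b)) \<otimes> (f (b \<otimes> inv c) \<otimes> c)"
    using assms by (simp add: galex_op_def m_assoc del: f_mult) (simp add: m_assoc)
  ultimately show ?thesis by simp
qed

lemma gop_div: assumes "a \<in> carrier G" "b \<in> carrier G"
  shows "\<exists>!x. x \<in> carrier G \<and> galex_op G f x a = b"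
proof -
  obtain y where y: "y \<in> carrier G" "f y = b \<otimes> inv a"
    using f_bij assms by (metis bij_betw_def imageE inv_closed m_closed)
  show ?thesis
  proof
    have s1: "(y \<otimes> a) \<otimes> inv a = y" using y assms by (simp add: m_assoc)
    have "galex_op G f (y \<otimes> a) a = f y \<otimes> a" by (simp only: galex_op_def s1)
    also have "\<dots> = b \<otimes> inv a \<otimes> a" by (simp only: y(2))
    also have "\<dots> = b" using assms by (simp add: m_assoc)
    finally show "y \<otimes> a \<in> carrier G \<and> galex_op G f (y \<otimes> a) a = b"
      using y assms by simp
  next
    fix x assume x: "x \<in> carrier G \<and> galex_op G f x a = b"
    have e: "f (x \<otimes> inv a) \<otimes> a = b" using x by (simp add: galex_op_def del: f_mult)
    have "f (x \<otimes> inv a) \<otimes> a \<otimes> inv a = b \<otimes> inv a" using e by simp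
    hence "f (x \<otimes> inv a) = f y" using x y assms by (simp add: m_assoc del: f_mult)
    hence e2: "x \<otimes> inv a = y" using f_bij x y assms
      by (meson bij_betw_def inj_onD inv_closed m_closed)
    have "x \<otimes> inv a \<otimes> a = y \<otimes> a" using e2 by simp
    thus "x = y \<otimes> a" using x y assms by (simp add: m_assoc)
  qed
qed

lemma galex_quandle: "quandle (carrier G) (galex_op G f)"
  unfolding quandle_def by (intro conjI ballI gop_carr gop_idem gop_div gop_dist) assumption+

lemma gop_L: assumes "l \<in> L" "m \<in> L" "a \<in> carrier G" "b \<in> carrier G"
  shows "galex_op G f (l \<otimes> a) (m \<otimes> b) = l \<otimes> galex_op G f a b"
proof -
  have c: "l \<in> carrier G" "m \<in> carrier G" using assms L_carr by auto
  have fl: "f l = l" "f (inv m) = inv m" using assms L_fix L_inv by auto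
  have e1: "(l \<otimes> a) \<otimes> inv (m \<otimes> b) = l \<otimes> (a \<otimes> inv b) \<otimes> inv m"
    using assms c by (simp add: m_assoc inv_mult_group)
  have e2: "f (l \<otimes> (a \<otimes> inv b) \<otimes> inv m) = f l \<otimes> f (a \<otimes> inv b) \<otimes> f (inv m)"
    using assms c by (simp only: f_mult m_closed inv_closed)
  have "galex_op G f (l \<otimes> a) (m \<otimes> b) = l \<otimes> f (a \<otimes> inv b) \<otimes> inv m \<otimes> (m \<otimes> b)"
    by (simp only: galex_op_def e1 e2 fl)
  also have "\<dots> = l \<otimes> (f (a \<otimes> inv b) \<otimes> b)" using assms c by (simp add: m_assoc cancel2 del: f_mult)
  also have "\<dots> = l \<otimes> galex_op G f a b" by (simp only: galex_op_def)
  finally show ?thesis .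
qed

lemma coset_eq: assumes "a \<in> carrier G" "b \<in> carrier G"
  shows "(L #> a = L #> b) \<longleftrightarrow> a \<otimes> inv b \<in> L"
proof
  assume "L #> a = L #> b"
  hence "a \<in> L #> b" using rcos_self assms subL by metis
  thus "a \<otimes> inv b \<in> L" using subgroup.rcos_module[OF subL is_group assms(2,1)] by blast
next
  assume "a \<otimes> inv b \<in> L"
  hence "a \<in> L #> b" using subgroup.rcos_module[OF subL is_group assms(2,1)] by blast
  thus "L #> a = L #> b" using repr_independence[OF _ assms(2) subL] by metis
qed

lemma coset_L: "l \<in> L \<Longrightarrow> a \<in> carrier G \<Longrightarrow> L #> (l \<otimes> a) = L #> a"
  by (metis L_carr L_sub coset_join2 coset_mult_assoc subL)

definition rep where "rep A = (SOME a. a \<in> carrier G \<and> A = L #> a)"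

lemma rep: "A \<in> rcosets L \<Longrightarrow> rep A \<in> carrier G \<and> A = L #> rep A"
  unfolding rep_def by (rule someI_ex) (auto simp: RCOSETS_def)

lemma rep_carr: "A \<in> rcosets L \<Longrightarrow> rep A \<in> carrier G" using rep by blast
lemma rep_coset: "A \<in> rcosets L \<Longrightarrow> L #> rep A = A" using rep by metis

lemma coset_in: "a \<in> carrier G \<Longrightarrow> L #> a \<in> rcosets L"
  using rcosetsI L_sub by blast

lemma hq_unf: "hq_op G L f A B = L #> galex_op G f (rep A) (rep B)"
  by (simp add: hq_op_def rep_def)

lemma hq_carr: "A \<in> rcosets L \<Longrightarrow> B \<in> rcosets L \<Longrightarrow> hq_op G L f A B \<in> rcosets L"
  by (simp add: hq_unf coset_in gop_carr rep_carr)

lemma rep_decomp: assumes "a \<in> carrier G"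
  shows "\<exists>l\<in>L. rep (L #> a) = l \<otimes> a"
proof -
  have r: "rep (L #> a) \<in> carrier G" "L #> a = L #> rep (L #> a)" using rep_carr rep_coset coset_in assms by auto
  hence "rep (L #> a) \<otimes> inv a \<in> L" using coset_eq assms by metis
  moreover have "rep (L #> a) = (rep (L #> a) \<otimes> inv a) \<otimes> a" using r(1) assms by (simp add: m_assoc)
  ultimately show ?thesis by blast
qed

lemma hq_welldef: assumes "a \<in> carrier G" "b \<in> carrier G"
  shows "hq_op G L f (L #> a) (L #> b) = L #> galex_op G f a b"
proof -
  obtain l m where "l \<in> L" "m \<in> L" "rep (L #> a) = l \<otimes> a" "rep (L #> b) = m \<otimes> b"
    using rep_decomp assms by metis
  thus ?thesis using assms by (simp add: hq_unf gop_L coset_L gop_carr)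
qed


definition phi where "phi A B = galex_op G f (rep A) (rep B) \<otimes> inv (rep (hq_op G L f A B))"
definition ii where "ii p = fst p \<otimes> rep (snd p)"

lemma phi_L: assumes "A \<in> rcosets L" "B \<in> rcosets L" shows "phi A B \<in> L"
proof -
  let ?g = "galex_op G f (rep A) (rep B)"
  have g: "?g \<in> carrier G" using gop_carr rep_carr assms by blast
  have r: "rep (hq_op G L f A B) \<in> carrier G" "hq_op G L f A B = L #> rep (hq_op G L f A B)"
    using rep_carr rep_coset hq_carr assms by auto
  have "L #> ?g = L #> rep (hq_op G L f A B)" using r hq_unf by metis
  hence "?g \<otimes> inv (rep (hq_op G L f A B)) \<in> L" using coset_eq[OF g r(1)] by blast
  thus ?thesis by (simp add: phi_def)
qed

lemma T_closed: "\<forall>p\<in>L \<times> rcosets L. \<forall>q\<in>L \<times> rcosets L. twisted_op G (hq_op G L f) phi p q \<in> L \<times> rcosets L"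
  by (auto simp: twisted_op_def L_mult phi_L hq_carr)

lemma ii_carr: "p \<in> L \<times> rcosets L \<Longrightarrow> ii p \<in> carrier G"
  by (auto simp: ii_def L_carr rep_carr)

lemma ii_coset: "p \<in> L \<times> rcosets L \<Longrightarrow> L #> ii p = snd p"
proof -
  assume p: "p \<in> L \<times> rcosets L"
  then obtain l A where la: "p = (l, A)" "l \<in> L" "A \<in> rcosets L" by auto
  have "L #> (l \<otimes> rep A) = L #> rep A" using coset_L la rep_carr by blast
  also have "\<dots> = A" using rep la by metis
  finally show ?thesis using la by (simp add: ii_def)
qed

lemma ii_hom: assumes "p \<in> L \<times> rcosets L" "q \<in> L \<times> rcosets L"
  shows "ii (twisted_op G (hq_op G L f) phi p q) = galex_op G f (ii p) (ii q)"
proof -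
  obtain l A m B where pq: "p = (l, A)" "q = (m, B)" "l \<in> L" "m \<in> L" "A \<in> rcosets L" "B \<in> rcosets L"
    using assms by auto
  have c: "l \<in> carrier G" "rep A \<in> carrier G" "rep B \<in> carrier G" "rep (hq_op G L f A B) \<in> carrier G"
    using pq L_carr rep_carr hq_carr by auto
  have g: "galex_op G f (rep A) (rep B) \<in> carrier G" using gop_carr c by blast
  have "ii (twisted_op G (hq_op G L f) phi p q) = l \<otimes> (galex_op G f (rep A) (rep B) \<otimes> (inv (rep (hq_op G L f A B)) \<otimes> rep (hq_op G L f A B)))"
    using pq c g by (simp add: ii_def twisted_op_def phi_def m_assoc)
  also have "\<dots> = l \<otimes> galex_op G f (rep A) (rep B)" using c g by simp
  also have "\<dots> = galex_op G f (ii p) (ii q)" using pq c gop_L by (simp add: ii_def)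
  finally show ?thesis .
qed

lemma ii_bij: "bij_betw ii (L \<times> rcosets L) (carrier G)"
proof -
  have inj: "inj_on ii (L \<times> rcosets L)"
  proof (rule inj_onI)
    fix p q assume pq: "p \<in> L \<times> rcosets L" "q \<in> L \<times> rcosets L" "ii p = ii q"
    have "snd p = L #> ii p" using ii_coset[OF pq(1)] by simp
    also have "\<dots> = L #> ii q" using pq(3) by simp
    also have "\<dots> = snd q" using ii_coset[OF pq(2)] .
    finally have s: "snd p = snd q" .
    hence "fst p \<otimes> rep (snd p) = fst q \<otimes> rep (snd p)" using pq by (simp add: ii_def)
    moreover have "fst p \<in> carrier G" "fst q \<in> carrier G" "rep (snd p) \<in> carrier G"
      using pq L_carr rep_carr by auto
    ultimately have "fst p = fst q" by simp
    thus "p = q" using s by (simp add: prod_eq_iff)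
  qed
  have "carrier G \<subseteq> ii ` (L \<times> rcosets L)"
  proof
    fix g assume g: "g \<in> carrier G"
    let ?r = "rep (L #> g)"
    have r: "?r \<in> carrier G" "L #> g = L #> ?r" using rep_carr rep_coset coset_in g by auto
    hence l: "g \<otimes> inv ?r \<in> L" using coset_eq g by metis
    have e: "ii (g \<otimes> inv ?r, L #> g) = g" using g r(1) by (simp add: ii_def m_assoc)
    have mem: "(g \<otimes> inv ?r, L #> g) \<in> L \<times> rcosets L" using l coset_in g by blast
    show "g \<in> ii ` (L \<times> rcosets L)" by (rule image_eqI[where f=ii, OF e[symmetric] mem])
  qed
  thus ?thesis using inj ii_carr unfolding bij_betw_def by blast
qed

lemma ii_iso: "quandle_iso (L \<times> rcosets L) (twisted_op G (hq_op G L f) phi) (carrier G) (galex_op G f) ii"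
  unfolding quandle_iso_def quandle_hom_def using ii_bij ii_carr ii_hom by blast

lemma T_quandle: "quandle (L \<times> rcosets L) (twisted_op G (hq_op G L f) phi)"
  using quandle_transport[OF galex_quandle ii_iso T_closed] .

abbreviation IM where "IM \<equiv> inn_map (carrier G) (galex_op G f)"

lemma inn_eq: assumes LF: "L = Fix G f" and xy: "x \<in> carrier G" "y \<in> carrier G"
  shows "IM x = IM y \<longleftrightarrow> L #> x = L #> y"
proof
  assume F: "IM x = IM y"
  have "IM x \<one> = IM y \<one>" using F by simp
  hence E: "inv (f x) \<otimes> x = inv (f y) \<otimes> y" using xy by (simp add: inn_map_def galex_op_def)
  have "f x \<otimes> (inv (f x) \<otimes> x) \<otimes> inv y = f x \<otimes> (inv (f y) \<otimes> y) \<otimes> inv y" using E by (simp only:)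
  hence h: "x \<otimes> inv y = f x \<otimes> inv (f y)" using xy by (simp add: m_assoc cancel1)
  have "f (x \<otimes> inv y) = f x \<otimes> inv (f y)" using xy by simp
  hence "f (x \<otimes> inv y) = x \<otimes> inv y" using h[symmetric] by (rule trans)
  hence "x \<otimes> inv y \<in> L" using xy LF by (simp add: Fix_def)
  thus "L #> x = L #> y" using coset_eq xy by blast
next
  assume "L #> x = L #> y"
  hence l: "x \<otimes> inv y \<in> L" using coset_eq xy by blast
  have x: "x = (x \<otimes> inv y) \<otimes> y" using xy by (simp add: m_assoc)
  have one: "\<one> \<in> L" by (rule subgroup.one_closed[OF subL])
  have "\<And>z. z \<in> carrier G \<Longrightarrow> galex_op G f z x = galex_op G f z y"
  proof -
    fix z assume z: "z \<in> carrier G"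
    have "galex_op G f (\<one> \<otimes> z) ((x \<otimes> inv y) \<otimes> y) = \<one> \<otimes> galex_op G f z y"
      using gop_L[OF one l z xy(2)] .
    thus "galex_op G f z x = galex_op G f z y" using x[symmetric] z xy gop_carr by simp
  qed
  thus "IM x = IM y" unfolding inn_map_def by (rule restrict_ext)
qed

definition jj where "jj A = IM (rep A)"

lemma some_rep: assumes LF: "L = Fix G f" and A: "A \<in> rcosets L"
  shows "(SOME a. a \<in> carrier G \<and> jj A = IM a) \<in> carrier G \<and>
        L #> (SOME a. a \<in> carrier G \<and> jj A = IM a) = A"
proof -
  define a where "a = (SOME a. a \<in> carrier G \<and> jj A = IM a)"
  have ex: "\<exists>a. a \<in> carrier G \<and> jj A = IM a" unfolding jj_def using rep_carr[OF A] by blast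
  have s: "a \<in> carrier G \<and> jj A = IM a" unfolding a_def using ex by (rule someI_ex)
  hence "IM (rep A) = IM a" by (simp add: jj_def)
  hence "L #> rep A = L #> a" using inn_eq[OF LF rep_carr[OF A]] s by blast
  hence "L #> a = A" using rep_coset[OF A] by simp
  hence "a \<in> carrier G \<and> L #> a = A" using s by blast
  thus ?thesis unfolding a_def .
qed

lemma jj_iso: assumes LF: "L = Fix G f"
  shows "quandle_iso (rcosets L) (hq_op G L f) (inn_carrier (carrier G) (galex_op G f))
            (inn_op (carrier G) (galex_op G f)) jj"
proof -
  have hom: "\<forall>A\<in>rcosets L. \<forall>B\<in>rcosets L. jj (hq_op G L f A B) = inn_op (carrier G) (galex_op G f) (jj A) (jj B)"
  proof (intro ballI)
    fix A B assume AB: "A \<in> rcosets L" "B \<in> rcosets L"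
    define a where "a = (SOME a. a \<in> carrier G \<and> jj A = IM a)"
    define b where "b = (SOME b. b \<in> carrier G \<and> jj B = IM b)"
    have a: "a \<in> carrier G" "L #> a = A" using some_rep[OF LF AB(1)] unfolding a_def by auto
    have b: "b \<in> carrier G" "L #> b = B" using some_rep[OF LF AB(2)] unfolding b_def by auto
    have io: "inn_op (carrier G) (galex_op G f) (jj A) (jj B) = IM (galex_op G f a b)"
      unfolding inn_op_def a_def b_def by (rule refl)
    have H: "hq_op G L f A B \<in> rcosets L" using hq_carr AB by blast
    have "L #> rep (hq_op G L f A B) = hq_op G L f A B" using rep_coset[OF H] .
    also have "\<dots> = hq_op G L f (L #> a) (L #> b)" using a b by simp
    also have "\<dots> = L #> galex_op G f a b" using hq_welldef a b by blast
    finally have "L #> rep (hq_op G L f A B) = L #> galex_op G f a b" .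
    hence "IM (rep (hq_op G L f A B)) = IM (galex_op G f a b)"
      using inn_eq[OF LF rep_carr[OF H] gop_carr[OF a(1) b(1)]] by blast
    thus "jj (hq_op G L f A B) = inn_op (carrier G) (galex_op G f) (jj A) (jj B)"
      using io by (simp add: jj_def)
  qed
  have carr: "\<forall>A\<in>rcosets L. jj A \<in> inn_carrier (carrier G) (galex_op G f)"
    unfolding jj_def inn_carrier_def using rep_carr by blast
  have inj: "inj_on jj (rcosets L)"
  proof (rule inj_onI)
    fix A B assume AB: "A \<in> rcosets L" "B \<in> rcosets L" "jj A = jj B"
    hence "L #> rep A = L #> rep B" using inn_eq[OF LF rep_carr[OF AB(1)] rep_carr[OF AB(2)]]
      unfolding jj_def by blast
    thus "A = B" using rep_coset[OF AB(1)] rep_coset[OF AB(2)] by simp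
  qed
  have "inn_carrier (carrier G) (galex_op G f) \<subseteq> jj ` (rcosets L)"
  proof
    fix F assume "F \<in> inn_carrier (carrier G) (galex_op G f)"
    then obtain g where g: "g \<in> carrier G" "F = IM g" by (auto simp: inn_carrier_def)
    have C: "L #> g \<in> rcosets L" using coset_in g(1) .
    have "L #> rep (L #> g) = L #> g" using rep_coset[OF C] .
    hence "IM (rep (L #> g)) = IM g" using inn_eq[OF LF rep_carr[OF C] g(1)] by blast
    hence "jj (L #> g) = F" using g(2) by (simp add: jj_def)
    thus "F \<in> jj ` (rcosets L)" using C by blast
  qed
  hence "bij_betw jj (rcosets L) (inn_carrier (carrier G) (galex_op G f))"
    using inj carr unfolding bij_betw_def by blast
  thus ?thesis using hom carr unfolding quandle_iso_def quandle_hom_def by blast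
qed

lemma jj_ii: assumes LF: "L = Fix G f" and p: "p \<in> L \<times> rcosets L" shows "jj (snd p) = IM (ii p)"
proof -
  have S: "snd p \<in> rcosets L" using p by auto
  have "L #> rep (snd p) = L #> ii p" using rep_coset[OF S] ii_coset[OF p] by simp
  hence "IM (rep (snd p)) = IM (ii p)" using inn_eq[OF LF rep_carr[OF S] ii_carr[OF p]] by blast
  thus ?thesis by (simp add: jj_def)
qed

end

theorem mainTheorem9:
  fixes G :: "('a, 'b) monoid_scheme" and f :: "'a \<Rightarrow> 'a" and L :: "'a set"
  assumes "group G" and "finite (carrier G)" and "f \<in> iso G G"
    and "subgroup L G" and "L \<subseteq> Fix G f"
  shows "\<exists>phi :: 'a set \<Rightarrow> 'a set \<Rightarrow> 'a.
           (\<forall>A\<in>rcosets\<^bsub>G\<^esub> L. \<forall>B\<in>rcosets\<^bsub>G\<^esub> L. phi A B \<in> L) \<and>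
           quandle (L \<times> rcosets\<^bsub>G\<^esub> L) (twisted_op G (hq_op G L f) phi) \<and>
           quandle_isomorphic (carrier G) (galex_op G f)
             (L \<times> rcosets\<^bsub>G\<^esub> L) (twisted_op G (hq_op G L f) phi) \<and>
           hom_equivalent
             (L \<times> rcosets\<^bsub>G\<^esub> L) (twisted_op G (hq_op G L f) phi)
             (rcosets\<^bsub>G\<^esub> L) (hq_op G L f) snd
             (carrier G) (galex_op G f)
             (rcosets\<^bsub>G\<^esub> L) (hq_op G L f) (\<lambda>g. L #>\<^bsub>G\<^esub> g) \<and>
           (L = Fix G f \<longrightarrow>
             hom_equivalent
               (L \<times> rcosets\<^bsub>G\<^esub> L) (twisted_op G (hq_op G L f) phi)
               (rcosets\<^bsub>G\<^esub> L) (hq_op G L f) snd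
               (carrier G) (galex_op G f)
               (inn_carrier (carrier G) (galex_op G f)) (inn_op (carrier G) (galex_op G f))
               (inn_map (carrier G) (galex_op G f)))"
proof -
  interpret gal G f L using assms by (simp add: gal_def gal_axioms_def)
  show ?thesis
  proof (rule exI[of _ phi], intro conjI impI)
    show "\<forall>A\<in>rcosets\<^bsub>G\<^esub> L. \<forall>B\<in>rcosets\<^bsub>G\<^esub> L. phi A B \<in> L" using phi_L by blast
    show "quandle (L \<times> rcosets\<^bsub>G\<^esub> L) (twisted_op G (hq_op G L f) phi)" by (rule T_quandle)
    show "quandle_isomorphic (carrier G) (galex_op G f) (L \<times> rcosets\<^bsub>G\<^esub> L) (twisted_op G (hq_op G L f) phi)"
      unfolding quandle_isomorphic_def by (rule exI, rule quandle_iso_inv[OF ii_iso T_closed])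
    show "hom_equivalent (L \<times> rcosets\<^bsub>G\<^esub> L) (twisted_op G (hq_op G L f) phi) (rcosets\<^bsub>G\<^esub> L) (hq_op G L f) snd
      (carrier G) (galex_op G f) (rcosets\<^bsub>G\<^esub> L) (hq_op G L f) (\<lambda>g. L #>\<^bsub>G\<^esub> g)"
      unfolding hom_equivalent_def
      apply (rule exI[of _ ii], rule exI[of _ "\<lambda>x. x"])
      using ii_iso quandle_iso_id ii_coset by simp
    assume LF: "L = Fix G f"
    show "hom_equivalent (L \<times> rcosets\<^bsub>G\<^esub> L) (twisted_op G (hq_op G L f) phi) (rcosets\<^bsub>G\<^esub> L) (hq_op G L f) snd
      (carrier G) (galex_op G f) (inn_carrier (carrier G) (galex_op G f)) (inn_op (carrier G) (galex_op G f))
      (inn_map (carrier G) (galex_op G f))"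
      unfolding hom_equivalent_def
      apply (rule exI[of _ ii], rule exI[of _ jj])
      using ii_iso jj_iso[OF LF] jj_ii[OF LF] by simp
  qed
qed

end
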